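(* Let $\mathcal B$ be the countable set of all finite sequences of positive integers. For each $B=(m_1,\dots,m_k)\in\mathcal B$ choose a tensor $\mathcal T^0_B\in\bigotimes_{i=1}^k\mathbb{C}^{m_i}$, in such a way that the collection of all entries of all the $\mathcal T^0_B$ ($B\in\mathcal B$) is algebraically independent over $\mathbb{Q}$. Then for every tensor network template $(G,c)$ with local ordering $L$, the Version II assignment $v\mapsto\mathcal T^0_{B_v}$ yields a map $\beta(G,c,L;\mathcal T^0)$ whose rank equals $\mathrm{QMF}(G,c,L)$.
   Context: A tensor network template $(G,c)$ consists of a finite undirected graph $G$ with edge set $E$ whose vertex set is partitioned as $S\sqcup T\sqcup V$. Every element of $S$ (inputs) and every element of $T$ (outputs) is an open end of degree $1$; the elements of $V$ are called vertices. For $u\in S\sqcup T$, $e(u)$ denotes the edge incident to $u$. A capacity function $c:E\to\mathbb{Z}_{>0}$ is given, and to each edge $e$ one associates $\mathbb{C}^{c_e}$ with a fixed basis. A local ordering $L$ fixes, at each vertex $v$ of degree $d_v$, an ordering $e(v,1),\dots,e(v,d_v)$ of the incident edge-ends. Given a tensor $\mathcal T_v\in\bigotimes_{i=1}^{d_v}\mathbb{C}^{c_{e(v,i)}}$ at each vertex, let $V_S=\bigotimes_{u\in S}\mathbb{C}^{c_{e(u)}}$ and $V_T=\bigotimes_{u\in T}\mathbb{C}^{c_{e(u)}}$. Contracting the network along all edges gives $\beta\in\mathrm{Hom}(V_S,V_T)$, whose matrix entries are $\langle I_T|\beta|I_S\rangle=\sum_W\prod_{v\in V}(\mathcal T_v)_{W|_v}$.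 Here $W$ ranges over all assignments of basis indices to all edges that agree with $I_S$ on input edges and $I_T$ on output edges, and $W|_v$ is the tuple of indices on $e(v,1),\dots,e(v,d_v)$. Version II: the valence type of $v$ is the sequence $B_v=(c_{e(v,1)},\dots,c_{e(v,d_v)})$. A Version II assignment chooses one tensor $\mathcal T_B\in\bigotimes_i\mathbb{C}^{m_i}$ for each valence type $B=(m_1,\dots,m_k)$ occurring, and places $\mathcal T_{B_v}$ at each vertex $v$. The result is denoted $\beta(G,c,L;\mathcal T)$, and $\mathrm{QMF}(G,c,L)$ is its maximal rank over all Version II assignments. *)

theory Defs
  imports "HOL-Library.FuncSet" Complex_Main
begin

text \<open>S, T, V are the inputs, outputs and vertices;
  E is the edge set; inc n lists the edge-ends at node n (for a vertex v this list,
  in order, is the local ordering e(v,1),...,e(v,d_v); a loop at v appears twice);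
  c is the capacity function.\<close>

definition tn_template ::
  "'n set \<Rightarrow> 'n set \<Rightarrow> 'n set \<Rightarrow> 'e set \<Rightarrow> ('n \<Rightarrow> 'e list) \<Rightarrow> ('e \<Rightarrow> nat) \<Rightarrow> bool" where
  "tn_template S T V E inc c \<longleftrightarrow>
     finite S \<and> finite T \<and> finite V \<and> finite E \<and>
     S \<inter> T = {} \<and> S \<inter> V = {} \<and> T \<inter> V = {} \<and>
     (\<forall>u \<in> S \<union> T. length (inc u) = 1) \<and>
     (\<forall>n \<in> S \<union> T \<union> V. set (inc n) \<subseteq> E) \<and>
     (\<forall>e \<in> E. (\<Sum>n \<in> S \<union> T \<union> V. count_list (inc n) e) = 2) \<and>
     (\<forall>e \<in> E. 0 < c e)"

definition open_edge :: "('n \<Rightarrow> 'e list) \<Rightarrow> 'n \<Rightarrow> 'e" where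
  "open_edge inc u = hd (inc u)"

definition valence_type :: "('n \<Rightarrow> 'e list) \<Rightarrow> ('e \<Rightarrow> nat) \<Rightarrow> 'n \<Rightarrow> nat list" where
  "valence_type inc c v = map c (inc v)"

text \<open>Basis index tuples of V_A = tensor product over open ends u in A (indices 0..c(e(u))-1).\<close>
definition open_indices :: "'n set \<Rightarrow> ('n \<Rightarrow> 'e list) \<Rightarrow> ('e \<Rightarrow> nat) \<Rightarrow> ('n \<Rightarrow> nat) set" where
  "open_indices A inc c = PiE A (\<lambda>u. {..< c (open_edge inc u)})"

text \<open>A Version II assignment is a function Tn with Tn B = the tensor chosen for valence type B,
  given by its entries Tn B (i_1,...,i_k).  Matrix entry <I_T| beta |I_S> of the contraction.\<close>
definition tn_entry ::
  "'n set \<Rightarrow> 'n set \<Rightarrow> 'n set \<Rightarrow> 'e set \<Rightarrow> ('n \<Rightarrow> 'e list) \<Rightarrow> ('e \<Rightarrow> nat) \<Rightarrow>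
   (nat list \<Rightarrow> nat list \<Rightarrow> complex) \<Rightarrow> ('n \<Rightarrow> nat) \<Rightarrow> ('n \<Rightarrow> nat) \<Rightarrow> complex" where
  "tn_entry S T V E inc c Tn IT IS =
     (\<Sum>W \<in> {W \<in> PiE E (\<lambda>e. {..< c e}).
               (\<forall>u\<in>S. W (open_edge inc u) = IS u) \<and> (\<forall>u\<in>T. W (open_edge inc u) = IT u)}.
        \<Prod>v\<in>V. Tn (valence_type inc c v) (map W (inc v)))"

definition mat_rank :: "'r set \<Rightarrow> 'c set \<Rightarrow> ('r \<Rightarrow> 'c \<Rightarrow> complex) \<Rightarrow> nat" where
  "mat_rank R C M = Max {card D | D. D \<subseteq> C \<and> finite D \<and>
      (\<forall>a. (\<forall>r\<in>R. (\<Sum>d\<in>D. a d * M r d) = 0) \<longrightarrow> (\<forall>d\<in>D. a d = 0))}"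

definition tn_rank ::
  "'n set \<Rightarrow> 'n set \<Rightarrow> 'n set \<Rightarrow> 'e set \<Rightarrow> ('n \<Rightarrow> 'e list) \<Rightarrow> ('e \<Rightarrow> nat) \<Rightarrow>
   (nat list \<Rightarrow> nat list \<Rightarrow> complex) \<Rightarrow> nat" where
  "tn_rank S T V E inc c Tn =
     mat_rank (open_indices T inc c) (open_indices S inc c) (tn_entry S T V E inc c Tn)"

definition QMF ::
  "'n set \<Rightarrow> 'n set \<Rightarrow> 'n set \<Rightarrow> 'e set \<Rightarrow> ('n \<Rightarrow> 'e list) \<Rightarrow> ('e \<Rightarrow> nat) \<Rightarrow> nat" where
  "QMF S T V E inc c = Max {tn_rank S T V E inc c Tn | Tn. True}"

definition alg_indep_Q :: "'i set \<Rightarrow> ('i \<Rightarrow> complex) \<Rightarrow> bool" where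
  "alg_indep_Q I x \<longleftrightarrow>
     (\<forall>(M :: ('i \<Rightarrow> nat) set) (a :: ('i \<Rightarrow> nat) \<Rightarrow> rat).
        finite M \<longrightarrow> (\<forall>m\<in>M. finite {i. m i \<noteq> 0} \<and> {i. m i \<noteq> 0} \<subseteq> I) \<longrightarrow>
        (\<Sum>m\<in>M. of_rat (a m) * (\<Prod>i\<in>{i. m i \<noteq> 0}. x i ^ m i)) = 0 \<longrightarrow>
        (\<forall>m\<in>M. a m = 0))"

definition tensor_entry_indices :: "(nat list \<times> nat list) set" where
  "tensor_entry_indices = {(B, idx). (\<forall>m \<in> set B. 0 < m) \<and> length idx = length B \<and>
                                        (\<forall>i < length B. idx ! i < B ! i)}"

end

theory Submission
  imports Defs
begin

definition mon :: "('i \<Rightarrow> nat) \<Rightarrow> ('i \<Rightarrow> complex) \<Rightarrow> complex" where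
  "mon m x = (\<Prod>i\<in>{i. m i \<noteq> 0}. x i ^ m i)"

lemma mon_superset:
  assumes "finite A" "{i. m i \<noteq> 0} \<subseteq> A"
  shows "mon m x = (\<Prod>i\<in>A. x i ^ m i)"
  unfolding mon_def using assms by (intro prod.mono_neutral_left) auto

lemma mon_add:
  assumes "finite {i. m1 i \<noteq> 0}" "finite {i. m2 i \<noteq> 0}"
  shows "mon (\<lambda>i. m1 i + m2 i) x = mon m1 x * mon m2 x"
proof -
  let ?A = "{i. m1 i \<noteq> 0} \<union> {i. m2 i \<noteq> 0}"
  have fA: "finite ?A" using assms by auto
  have "mon (\<lambda>i. m1 i + m2 i) x = (\<Prod>i\<in>?A. x i ^ (m1 i + m2 i))"
    by (rule mon_superset[OF fA]) auto
  also have "\<dots> = (\<Prod>i\<in>?A. x i ^ m1 i) * (\<Prod>i\<in>?A. x i ^ m2 i)"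
    by (simp add: power_add prod.distrib)
  also have "\<dots> = mon m1 x * mon m2 x"
    using mon_superset[OF fA, of m1 x] mon_superset[OF fA, of m2 x] by auto
  finally show ?thesis .
qed

inductive ispoly :: "'i set \<Rightarrow> (('i \<Rightarrow> complex) \<Rightarrow> complex) \<Rightarrow> bool" for I where
  pconst: "ispoly I (\<lambda>x. of_int k)"
| pvar: "i \<in> I \<Longrightarrow> ispoly I (\<lambda>x. x i)"
| padd: "ispoly I f \<Longrightarrow> ispoly I g \<Longrightarrow> ispoly I (\<lambda>x. f x + g x)"
| pmult: "ispoly I f \<Longrightarrow> ispoly I g \<Longrightarrow> ispoly I (\<lambda>x. f x * g x)"

lemma ispoly_zero: "ispoly I (\<lambda>x. 0)"
  using pconst[of I 0] by simp

lemma ispoly_one: "ispoly I (\<lambda>x. 1)"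
  using pconst[of I 1] by simp

lemma ispoly_sum:
  assumes "\<forall>k\<in>K. ispoly I (f k)"
  shows "ispoly I (\<lambda>x. \<Sum>k\<in>K. f k x)"
proof (cases "finite K")
  case True
  then show ?thesis using assms
  proof (induction K rule: finite_induct)
    case empty then show ?case using ispoly_zero by simp
  next
    case (insert k K)
    then show ?case by (simp add: padd)
  qed
next
  case False then show ?thesis using ispoly_zero by simp
qed

lemma ispoly_prod:
  assumes "\<forall>k\<in>K. ispoly I (f k)"
  shows "ispoly I (\<lambda>x. \<Prod>k\<in>K. f k x)"
proof (cases "finite K")
  case True
  then show ?thesis using assms
  proof (induction K rule: finite_induct)
    case empty then show ?case using ispoly_one by simp
  next
    case (insert k K)
    then show ?case by (simp add: pmult)
  qed
next
  case False then show ?thesis using ispoly_one by simp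
qed

lemma ispoly_elim:
  assumes "ispoly I f" "ispoly I g" "ispoly I h" "ispoly I k"
  shows "ispoly I (\<lambda>y. f y * g y - h y * k y)"
proof -
  have "ispoly I (\<lambda>y. f y * g y + (\<lambda>x. of_int (-1)) y * (h y * k y))"
    using assms by (intro padd pmult pconst)
  then show ?thesis by simp
qed

definition evl :: "(rat \<times> ('i \<Rightarrow> nat)) list \<Rightarrow> ('i \<Rightarrow> complex) \<Rightarrow> complex" where
  "evl L x = sum_list (map (\<lambda>(q, m). of_rat q * mon m x) L)"

definition okrep :: "'i set \<Rightarrow> (rat \<times> ('i \<Rightarrow> nat)) list \<Rightarrow> bool" where
  "okrep I L \<longleftrightarrow> (\<forall>p\<in>set L. finite {i. snd p i \<noteq> 0} \<and> {i. snd p i \<noteq> 0} \<subseteq> I)"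

definition pmul :: "(rat \<times> ('i \<Rightarrow> nat)) list \<Rightarrow> (rat \<times> ('i \<Rightarrow> nat)) list \<Rightarrow> (rat \<times> ('i \<Rightarrow> nat)) list" where
  "pmul L1 L2 = concat (map (\<lambda>(q1, m1). map (\<lambda>(q2, m2). (q1 * q2, \<lambda>i. m1 i + m2 i)) L2) L1)"

lemma evl_append: "evl (L1 @ L2) x = evl L1 x + evl L2 x"
  by (simp add: evl_def)

lemma evl_pmul:
  assumes "okrep I L1" "okrep I L2"
  shows "evl (pmul L1 L2) x = evl L1 x * evl L2 x"
  using assms(1)
proof (induction L1)
  case Nil then show ?case by (simp add: evl_def pmul_def)
next
  case (Cons p L1)
  obtain q1 m1 where p: "p = (q1, m1)" by force
  have f1: "finite {i. m1 i \<noteq> 0}" using Cons.prems p by (auto simp: okrep_def)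
  have ok1: "okrep I L1" using Cons.prems by (auto simp: okrep_def)
  have "evl (map (\<lambda>(q2, m2). (q1 * q2, \<lambda>i. m1 i + m2 i)) L2) x
        = of_rat q1 * mon m1 x * evl L2 x"
    using assms(2)
  proof (induction L2)
    case Nil then show ?case by (simp add: evl_def)
  next
    case (Cons p2 L2)
    obtain q2 m2 where p2: "p2 = (q2, m2)" by force
    have f2: "finite {i. m2 i \<noteq> 0}" using Cons.prems p2 by (auto simp: okrep_def)
    have ok2: "okrep I L2" using Cons.prems by (auto simp: okrep_def)
    have "evl ((q1 * q2, \<lambda>i. m1 i + m2 i) # map (\<lambda>(q2, m2). (q1 * q2, \<lambda>i. m1 i + m2 i)) L2) x
       = of_rat (q1 * q2) * mon (\<lambda>i. m1 i + m2 i) x + evl (map (\<lambda>(q2, m2). (q1 * q2, \<lambda>i. m1 i + m2 i)) L2) x"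
      by (simp add: evl_def)
    also have "\<dots> = of_rat q1 * mon m1 x * (of_rat q2 * mon m2 x) + of_rat q1 * mon m1 x * evl L2 x"
      using Cons.IH[OF ok2] mon_add[OF f1 f2] by (simp add: of_rat_mult)
    also have "\<dots> = of_rat q1 * mon m1 x * evl (p2 # L2) x"
      by (simp add: evl_def p2 algebra_simps)
    finally show ?case using p2 by simp
  qed
  then show ?case using Cons.IH[OF ok1] p
    by (simp add: pmul_def evl_def algebra_simps)
qed

lemma ispoly_rep:
  assumes "ispoly I P"
  shows "\<exists>L. okrep I L \<and> (\<forall>x. P x = evl L x)"
  using assms
proof (induction rule: ispoly.induct)
  case (pconst k)
  show ?case
    by (rule exI[of _ "[(of_int k, \<lambda>_. 0)]"]) (simp add: okrep_def evl_def mon_def)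
next
  case (pvar i)
  have "{j. (if j = i then 1 else 0::nat) \<noteq> 0} = {i}" by auto
  then show ?case using pvar
    by (intro exI[of _ "[(1, \<lambda>j. if j = i then 1 else 0)]"]) (simp add: okrep_def evl_def mon_def)
next
  case (padd f g)
  then obtain L1 L2 where "okrep I L1" "\<forall>x. f x = evl L1 x" "okrep I L2" "\<forall>x. g x = evl L2 x" by blast
  then show ?case
    by (intro exI[of _ "L1 @ L2"]) (auto simp: okrep_def evl_append)
next
  case (pmult f g)
  then obtain L1 L2 where h: "okrep I L1" "\<forall>x. f x = evl L1 x" "okrep I L2" "\<forall>x. g x = evl L2 x" by blast
  have "okrep I (pmul L1 L2)"
    using h(1,3) unfolding okrep_def pmul_def
    by (fastforce intro: finite_subset[of _ "{i. _ i \<noteq> 0} \<union> {i. _ i \<noteq> 0}"])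
  then show ?case using h evl_pmul[OF h(1,3)]
    by (intro exI[of _ "pmul L1 L2"]) auto
qed

definition coef :: "(rat \<times> ('i \<Rightarrow> nat)) list \<Rightarrow> ('i \<Rightarrow> nat) \<Rightarrow> rat" where
  "coef L m = sum_list (map (\<lambda>p. if snd p = m then fst p else 0) L)"

lemma evl_coef:
  assumes "finite A" "snd ` set L \<subseteq> A"
  shows "(\<Sum>m\<in>A. of_rat (coef L m) * mon m x) = evl L x"
  using assms(2)
proof (induction L)
  case Nil then show ?case by (simp add: coef_def evl_def)
next
  case (Cons p L)
  obtain q m0 where p: "p = (q, m0)" by force
  have m0: "m0 \<in> A" using Cons.prems p by auto
  have "(\<Sum>m\<in>A. of_rat (coef (p # L) m) * mon m x)
     = (\<Sum>m\<in>A. (if m0 = m then of_rat q * mon m x else 0)) + (\<Sum>m\<in>A. of_rat (coef L m) * mon m x)"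
  proof -
    have "coef (p # L) m = (if m0 = m then q else 0) + coef L m" for m
      by (simp add: coef_def p)
    then show ?thesis
      by (simp only: sum.distrib[symmetric]) (intro sum.cong refl, simp add: of_rat_add distrib_right)
  qed
  also have "\<dots> = of_rat q * mon m0 x + evl L x"
    using Cons m0 assms(1) by (simp add: sum.delta)
  finally show ?case by (simp add: evl_def p)
qed

lemma ispoly_generic:
  assumes "ispoly I P" "alg_indep_Q I x0" "P y1 \<noteq> 0"
  shows "P x0 \<noteq> 0"
proof
  assume z: "P x0 = 0"
  obtain L where L: "okrep I L" "\<forall>x. P x = evl L x" using ispoly_rep[OF assms(1)] by blast
  let ?M = "snd ` set L"
  have fM: "finite ?M" by simp
  have eq: "\<And>x. P x = (\<Sum>m\<in>?M. of_rat (coef L m) * mon m x)"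
    using L(2) evl_coef[OF fM] by simp
  have "\<forall>m\<in>?M. coef L m = 0"
    using assms(2) unfolding alg_indep_Q_def
    apply (elim allE[of _ ?M] allE[of _ "coef L"])
    using L(1) z eq[of x0] by (auto simp: okrep_def mon_def)
  then have "(\<Sum>m\<in>?M. of_rat (coef L m) * mon m y1) = 0" by (intro sum.neutral) simp
  then have "P y1 = 0" using eq[of y1] by simp
  then show False using assms(3) by simp
qed

definition indep :: "'r set \<Rightarrow> 'd set \<Rightarrow> ('r \<Rightarrow> 'd \<Rightarrow> complex) \<Rightarrow> bool" where
  "indep R D M \<longleftrightarrow> (\<forall>a. (\<forall>r\<in>R. (\<Sum>d\<in>D. a d * M r d) = 0) \<longrightarrow> (\<forall>d\<in>D. a d = 0))"

lemma indep_transfer: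
  assumes closed: "\<And>f g h k. f \<in> P \<Longrightarrow> g \<in> P \<Longrightarrow> h \<in> P \<Longrightarrow> k \<in> P \<Longrightarrow> (\<lambda>y. f y * g y - h y * k y) \<in> P"
    and gen: "\<And>f. f \<in> P \<Longrightarrow> f y1 \<noteq> 0 \<Longrightarrow> f x0 \<noteq> 0"
  shows "finite D \<Longrightarrow> (\<forall>r\<in>R. \<forall>d\<in>D. F r d \<in> P) \<Longrightarrow> indep R D (\<lambda>r d. F r d y1) \<Longrightarrow> indep R D (\<lambda>r d. F r d x0)"
proof (induction D arbitrary: F rule: finite_induct)
  case empty then show ?case by (simp add: indep_def)
next
  case (insert d0 D F)
  have "\<exists>r0\<in>R. F r0 d0 y1 \<noteq> 0"
  proof (rule ccontr)
    assume nz: "\<not> ?thesis"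
    define a where "a = (\<lambda>d. if d = d0 then 1 else (0::complex))"
    have "\<forall>r\<in>R. (\<Sum>d\<in>insert d0 D. a d * F r d y1) = 0"
    proof
      fix r assume r: "r \<in> R"
      have "(\<Sum>d\<in>insert d0 D. a d * F r d y1)
          = (\<Sum>d\<in>insert d0 D. (if d = d0 then F r d0 y1 else 0))"
        unfolding a_def by (rule sum.cong) auto
      also have "\<dots> = F r d0 y1" using insert.hyps(1) by (simp add: sum.delta)
      also have "\<dots> = 0" using nz r by blast
      finally show "(\<Sum>d\<in>insert d0 D. a d * F r d y1) = 0" .
    qed
    then have "\<forall>d\<in>insert d0 D. a d = 0"
      using insert.prems(2) unfolding indep_def by blast
    then show False by (simp add: a_def)
  qed
  then obtain r0 where r0: "r0 \<in> R" "F r0 d0 y1 \<noteq> 0" by blast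
  define G where "G r d = (\<lambda>y. F r0 d0 y * F r d y - F r d0 y * F r0 d y)" for r d
  have GP: "\<forall>r\<in>R. \<forall>d\<in>D. G r d \<in> P"
    using insert.prems(1) r0(1) unfolding G_def by (auto intro: closed)
  have indG1: "indep R D (\<lambda>r d. G r d y1)"
    unfolding indep_def
  proof (intro allI impI)
    fix a
    assume H: "\<forall>r\<in>R. (\<Sum>d\<in>D. a d * G r d y1) = 0"
    define p where "p = F r0 d0 y1"
    define Sx where "Sx = (\<Sum>d\<in>D. a d * F r0 d y1)"
    define b where "b = a(d0 := - Sx / p)"
    have "\<forall>r\<in>R. (\<Sum>d\<in>insert d0 D. b d * F r d y1) = 0"
    proof
      fix r assume r: "r \<in> R"
      have sD: "(\<Sum>d\<in>D. b d * F r d y1) = (\<Sum>d\<in>D. a d * F r d y1)"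
        unfolding b_def using insert.hyps by (intro sum.cong) auto
      have "(\<Sum>d\<in>D. a d * G r d y1) = p * (\<Sum>d\<in>D. a d * F r d y1) - F r d0 y1 * Sx"
        unfolding G_def p_def Sx_def
        by (simp add: sum_distrib_left sum_subtractf algebra_simps)
      then have "p * (\<Sum>d\<in>D. a d * F r d y1) = F r d0 y1 * Sx" using H r by simp
      then have "(\<Sum>d\<in>D. a d * F r d y1) = F r d0 y1 * Sx / p"
        using r0(2) unfolding p_def by (simp add: field_simps)
      then show "(\<Sum>d\<in>insert d0 D. b d * F r d y1) = 0"
        using insert.hyps sD unfolding b_def by simp
    qed
    then have "\<forall>d\<in>insert d0 D. b d = 0"
      using insert.prems(2) unfolding indep_def by blast
    then have bz: "\<forall>d\<in>insert d0 D. b d = 0" .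
    show "\<forall>d\<in>D. a d = 0"
    proof
      fix d assume d: "d \<in> D"
      then have "d \<noteq> d0" using insert.hyps by auto
      moreover have "b d = 0" using bz d by blast
      ultimately show "a d = 0" unfolding b_def by simp
    qed
  qed
  have indG0: "indep R D (\<lambda>r d. G r d x0)"
    using insert.IH[of G] GP indG1 by blast
  have q: "F r0 d0 x0 \<noteq> 0" using gen insert.prems(1) r0 by blast
  show ?case
    unfolding indep_def
  proof (intro allI impI)
    fix b
    assume H: "\<forall>r\<in>R. (\<Sum>d\<in>insert d0 D. b d * F r d x0) = 0"
    have Hr: "(\<Sum>d\<in>D. b d * F r d x0) = - (b d0 * F r d0 x0)" if "r \<in> R" for r
      using H that insert.hyps by (simp add: add_eq_0_iff)
    have "\<forall>r\<in>R. (\<Sum>d\<in>D. b d * G r d x0) = 0"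
    proof
      fix r assume r: "r \<in> R"
      have "(\<Sum>d\<in>D. b d * G r d x0) = F r0 d0 x0 * (\<Sum>d\<in>D. b d * F r d x0) - F r d0 x0 * (\<Sum>d\<in>D. b d * F r0 d x0)"
        unfolding G_def by (simp add: sum_distrib_left sum_subtractf algebra_simps)
      also have "\<dots> = 0" using Hr[OF r] Hr[OF r0(1)] by (simp add: algebra_simps)
      finally show "(\<Sum>d\<in>D. b d * G r d x0) = 0" .
    qed
    then have bD: "\<forall>d\<in>D. b d = 0" using indG0 unfolding indep_def by blast
    then have "(\<Sum>d\<in>D. b d * F r0 d x0) = 0" by simp
    then have "b d0 * F r0 d0 x0 = 0" using Hr[OF r0(1)] by simp
    then have "b d0 = 0" using q by simp
    then show "\<forall>d\<in>insert d0 D. b d = 0" using bD by simp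
  qed
qed

lemma indep_generic:
  assumes "alg_indep_Q I x0" "finite D" "\<forall>r\<in>R. \<forall>d\<in>D. ispoly I (F r d)"
    "indep R D (\<lambda>r d. F r d y1)"
  shows "indep R D (\<lambda>r d. F r d x0)"
proof (rule indep_transfer[where P="Collect (ispoly I)"])
  show "\<And>f g h k. f \<in> Collect (ispoly I) \<Longrightarrow> g \<in> Collect (ispoly I) \<Longrightarrow> h \<in> Collect (ispoly I)
        \<Longrightarrow> k \<in> Collect (ispoly I) \<Longrightarrow> (\<lambda>y. f y * g y - h y * k y) \<in> Collect (ispoly I)"
    by (auto intro: ispoly_elim)
  show "\<And>f. f \<in> Collect (ispoly I) \<Longrightarrow> f y1 \<noteq> 0 \<Longrightarrow> f x0 \<noteq> 0"
    using ispoly_generic assms(1) by blast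
  show "finite D" by fact
  show "\<forall>r\<in>R. \<forall>d\<in>D. F r d \<in> Collect (ispoly I)" using assms(3) by auto
  show "indep R D (\<lambda>r d. F r d y1)" by fact
qed

lemma mat_rank_props:
  assumes "finite C"
  shows "\<exists>D. D \<subseteq> C \<and> finite D \<and> indep R D M \<and> card D = mat_rank R C M"
    and "D \<subseteq> C \<Longrightarrow> indep R D M \<Longrightarrow> card D \<le> mat_rank R C M"
    and "mat_rank R C M \<le> card C"
proof -
  let ?K = "{card D | D. D \<subseteq> C \<and> finite D \<and> indep R D M}"
  have eqK: "mat_rank R C M = Max ?K" unfolding mat_rank_def indep_def by simp
  have sub: "?K \<subseteq> {..card C}" using assms by (auto intro: card_mono)
  have fK: "finite ?K" using finite_subset[OF sub] by simp
  have "0 \<in> ?K" by (rule CollectI, rule exI[of _ "{}"]) (simp add: indep_def)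
  then have ne: "?K \<noteq> {}" by blast
  show "\<exists>D. D \<subseteq> C \<and> finite D \<and> indep R D M \<and> card D = mat_rank R C M"
    using Max_in[OF fK ne] eqK by auto
  show "D \<subseteq> C \<Longrightarrow> indep R D M \<Longrightarrow> card D \<le> mat_rank R C M"
    using eqK fK assms by (auto intro!: Max_ge dest: finite_subset)
  show "mat_rank R C M \<le> card C" using Max_in[OF fK ne] eqK sub by auto
qed

theorem proposition4p5:
  fixes T0 :: "nat list \<Rightarrow> nat list \<Rightarrow> complex"
    and S T V :: "'n set" and E :: "'e set"
    and inc :: "'n \<Rightarrow> 'e list" and c :: "'e \<Rightarrow> nat"
  assumes "alg_indep_Q tensor_entry_indices (\<lambda>(B, idx). T0 B idx)"
    and "tn_template S T V E inc c"
  shows "tn_rank S T V E inc c T0 = QMF S T V E inc c"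
proof -
  let ?I = "tensor_entry_indices"
  let ?C = "open_indices S inc c"
  let ?R = "open_indices T inc c"
  let ?x0 = "\<lambda>(B, idx). T0 B idx"
  have tmpl: "finite S" "\<forall>n\<in>S \<union> T \<union> V. set (inc n) \<subseteq> E" "\<forall>e\<in>E. 0 < c e"
    using assms(2) unfolding tn_template_def by auto
  have fC: "finite ?C" unfolding open_indices_def using tmpl(1) by (intro finite_PiE) auto
  let ?Q = "{tn_rank S T V E inc c Tn | Tn. True}"
  have subQ: "?Q \<subseteq> {..card ?C}"
    unfolding tn_rank_def using mat_rank_props(3)[OF fC] by auto
  have fQ: "finite ?Q" using finite_subset[OF subQ] by simp
  have neQ: "?Q \<noteq> {}" by blast
  obtain Tn1 where Tn1: "tn_rank S T V E inc c Tn1 = QMF S T V E inc c"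
    using Max_in[OF fQ neQ] unfolding QMF_def by auto
  have le: "tn_rank S T V E inc c T0 \<le> QMF S T V E inc c"
    unfolding QMF_def using fQ by (intro Max_ge) auto
  let ?y1 = "\<lambda>(B, idx). Tn1 B idx"
  define F where "F IT IS = (\<lambda>y. tn_entry S T V E inc c (\<lambda>B idx. y (B, idx)) IT IS)" for IT IS
  have FP: "ispoly ?I (F IT IS)" for IT IS
    unfolding F_def tn_entry_def
  proof (intro ispoly_sum ballI ispoly_prod)
    fix W v
    assume W: "W \<in> {W \<in> PiE E (\<lambda>e. {..< c e}).
               (\<forall>u\<in>S. W (open_edge inc u) = IS u) \<and> (\<forall>u\<in>T. W (open_edge inc u) = IT u)}"
      and v: "v \<in> V"
    have sv: "set (inc v) \<subseteq> E" using tmpl(2) v by auto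
    have h1: "\<forall>m\<in>set (map c (inc v)). 0 < m" using sv tmpl(3) by auto
    have h2: "\<forall>i<length (inc v). W (inc v ! i) < c (inc v ! i)"
    proof (intro allI impI)
      fix i assume i: "i < length (inc v)"
      then have "inc v ! i \<in> E" using sv nth_mem by blast
      then show "W (inc v ! i) < c (inc v ! i)" using W by auto
    qed
    have "(valence_type inc c v, map W (inc v)) \<in> ?I"
      unfolding tensor_entry_indices_def valence_type_def using h1 h2 by simp
    then show "ispoly ?I (\<lambda>y. y (valence_type inc c v, map W (inc v)))"
      by (rule pvar)
  qed
  obtain D where D: "D \<subseteq> ?C" "finite D" "indep ?R D (tn_entry S T V E inc c Tn1)"
    "card D = tn_rank S T V E inc c Tn1"
    using mat_rank_props(1)[OF fC] unfolding tn_rank_def by blast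
  have e1: "(\<lambda>r d. F r d ?y1) = tn_entry S T V E inc c Tn1" unfolding F_def by simp
  have e0: "(\<lambda>r d. F r d ?x0) = tn_entry S T V E inc c T0" unfolding F_def by simp
  have fp: "\<forall>r\<in>?R. \<forall>d\<in>D. ispoly ?I (F r d)" using FP by auto
  have ii: "indep ?R D (\<lambda>r d. F r d ?y1)" using D(3) e1 by simp
  have "indep ?R D (\<lambda>r d. F r d ?x0)"
    by (rule indep_generic[OF assms(1) D(2) fp ii])
  then have "card D \<le> tn_rank S T V E inc c T0"
    unfolding tn_rank_def using mat_rank_props(2)[OF fC] D(1) e0 by simp
  then show ?thesis using le Tn1 D(4) by simp
qed

end
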